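(* Let $X$ be a finite set. \begin{enumerate} \item Let $(p_B)_{B\subseteq X}$ be nonnegative reals summing to $1$, let $\tilde p_B=(p_B+p_{X\setminus B})/2$, and for $A\subseteq X$ let $s_A=\sum_{B\in\mathcal{S}_A}p_B$ where $\mathcal{S}_A=\{B\subseteq X: A\cap B\neq\emptyset,\ A\cap(X\setminus B)\neq\emptyset\}$. For $A\subseteq X$ define $\gamma_A=\sum_{B\subseteq X:\,|A\cap B|\text{ odd}}\tilde p_B$ if $|A|$ is even and $\gamma_A=0$ if $|A|$ is odd. Then for all $A,B\subseteq X$, \[ \gamma_A=\sum_{C\subseteq A}(-2)^{|C|-2}s_C,\qquad s_B=\frac{1}{2^{|B|-2}}\sum_{C\subseteq B}\gamma_C . \] \item Let $T$ be a phylogenetic tree with leaf set $X$ and nonnegative branch lengths. For $B\subseteq X$ let $\tilde w_B=w_{B|X\setminus B}/2$, where $w_{B|X\setminus B}$ is the length of the edge of $T$ whose deletion splits the leaves into $B$ and $X\setminus B$ if such an edge exists, and $0$ otherwise. Let $\delta_A$ be the sum of branch lengths of the smallest subtree of $T$ connecting $A$ ($\delta_A=0$ if $|A|\le 1$). For $A\subseteq X$ define $\mu_A=\sum_{B\subseteq X:\,|A\cap B|\text{ odd}}\tilde w_B$ if $|A|$ is even and $\mu_A=0$ if $|A|$ is odd. Then for all $A,B\subseteq X$, \[ \mu_A=\sum_{C\subseteq A}(-2)^{|C|-2}\delta_C,\qquad \delta_B=\frac{1}{2^{|B|-2}}\sum_{C\subseteq B}\mu_C . \] \end{enumerate}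
   Context: $p_B$ is the probability that at a bi-allelic site exactly the taxa in $B$ have state $1$; $s_A$ is the probability that a site is non-constant over $A$. A phylogenetic tree with leaf set $X$ is a tree whose leaves are bijectively labelled by $X$ and whose internal vertices have degree at least $3$. *)

theory Defs
  imports Complex_Main
begin

definition ptilde :: "'x set \<Rightarrow> ('x set \<Rightarrow> real) \<Rightarrow> 'x set \<Rightarrow> real" where
  "ptilde X p B = (p B + p (X - B)) / 2"

definition Sfam :: "'x set \<Rightarrow> 'x set \<Rightarrow> 'x set set" where
  "Sfam X A = {B. B \<subseteq> X \<and> A \<inter> B \<noteq> {} \<and> A \<inter> (X - B) \<noteq> {}}"

definition sA :: "'x set \<Rightarrow> ('x set \<Rightarrow> real) \<Rightarrow> 'x set \<Rightarrow> real" where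
  "sA X p A = (\<Sum>B\<in>Sfam X A. p B)"

definition gamma :: "'x set \<Rightarrow> ('x set \<Rightarrow> real) \<Rightarrow> 'x set \<Rightarrow> real" where
  "gamma X p A = (if even (card A)
     then (\<Sum>B\<in>{B. B \<subseteq> X \<and> odd (card (A \<inter> B))}. ptilde X p B) else 0)"

definition simple_graph :: "'v set \<Rightarrow> 'v set set \<Rightarrow> bool" where
  "simple_graph V E \<longleftrightarrow> finite V \<and> (\<forall>e\<in>E. e \<subseteq> V \<and> card e = 2)"

definition adj :: "'v set set \<Rightarrow> ('v \<times> 'v) set" where
  "adj E = {(u, v). {u, v} \<in> E}"

definition connected_graph :: "'v set \<Rightarrow> 'v set set \<Rightarrow> bool" where
  "connected_graph V E \<longleftrightarrow> (\<forall>u\<in>V. \<forall>v\<in>V. (u, v) \<in> (adj E)\<^sup>*)"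

definition has_cycle :: "'v set \<Rightarrow> 'v set set \<Rightarrow> bool" where
  "has_cycle V E \<longleftrightarrow> (\<exists>vs. length vs \<ge> 3 \<and> distinct vs \<and> set vs \<subseteq> V \<and>
      (\<forall>i < length vs. {vs ! i, vs ! ((i + 1) mod length vs)} \<in> E))"

definition is_tree :: "'v set \<Rightarrow> 'v set set \<Rightarrow> bool" where
  "is_tree V E \<longleftrightarrow> simple_graph V E \<and> V \<noteq> {} \<and> connected_graph V E \<and> \<not> has_cycle V E"

definition degree :: "'v set set \<Rightarrow> 'v \<Rightarrow> nat" where
  "degree E v = card {e \<in> E. v \<in> e}"

definition leaves :: "'v set \<Rightarrow> 'v set set \<Rightarrow> 'v set" where
  "leaves V E = {v \<in> V. degree E v \<le> 1}"

definition phylo_tree :: "'x set \<Rightarrow> 'v set \<Rightarrow> 'v set set \<Rightarrow> ('x \<Rightarrow> 'v) \<Rightarrow> bool" where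
  "phylo_tree X V E \<phi> \<longleftrightarrow> is_tree V E \<and> bij_betw \<phi> X (leaves V E) \<and>
     (\<forall>v \<in> V - leaves V E. degree E v \<ge> 3)"

definition induces_split :: "'x set \<Rightarrow> 'v set set \<Rightarrow> ('x \<Rightarrow> 'v) \<Rightarrow> 'v set \<Rightarrow> 'x set \<Rightarrow> bool" where
  "induces_split X E \<phi> e B \<longleftrightarrow> (\<exists>u v. e = {u, v} \<and>
      B = {x \<in> X. (u, \<phi> x) \<in> (adj (E - {e}))\<^sup>*})"

definition wsplit :: "'x set \<Rightarrow> 'v set set \<Rightarrow> ('x \<Rightarrow> 'v) \<Rightarrow> ('v set \<Rightarrow> real) \<Rightarrow> 'x set \<Rightarrow> real" where
  "wsplit X E \<phi> len B = (if \<exists>e\<in>E. induces_split X E \<phi> e B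
      then len (SOME e. e \<in> E \<and> induces_split X E \<phi> e B) else 0)"

definition wtilde :: "'x set \<Rightarrow> 'v set set \<Rightarrow> ('x \<Rightarrow> 'v) \<Rightarrow> ('v set \<Rightarrow> real) \<Rightarrow> 'x set \<Rightarrow> real" where
  "wtilde X E \<phi> len B = wsplit X E \<phi> len B / 2"

definition subtree :: "'v set \<Rightarrow> 'v set set \<Rightarrow> 'v set \<Rightarrow> 'v set set \<Rightarrow> bool" where
  "subtree V E V' E' \<longleftrightarrow> V' \<subseteq> V \<and> E' \<subseteq> E \<and> (\<forall>e\<in>E'. e \<subseteq> V') \<and> V' \<noteq> {} \<and>
     connected_graph V' E'"

definition span_edges :: "'v set \<Rightarrow> 'v set set \<Rightarrow> ('x \<Rightarrow> 'v) \<Rightarrow> 'x set \<Rightarrow> 'v set set" where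
  "span_edges V E \<phi> A = (THE E'. \<exists>V'. subtree V E V' E' \<and> \<phi> ` A \<subseteq> V' \<and>
      (\<forall>V'' E''. subtree V E V'' E'' \<and> \<phi> ` A \<subseteq> V'' \<longrightarrow> V' \<subseteq> V'' \<and> E' \<subseteq> E''))"

definition delta :: "'v set \<Rightarrow> 'v set set \<Rightarrow> ('x \<Rightarrow> 'v) \<Rightarrow> ('v set \<Rightarrow> real) \<Rightarrow> 'x set \<Rightarrow> real" where
  "delta V E \<phi> len A = (if card A \<le> 1 then 0 else (\<Sum>e\<in>span_edges V E \<phi> A. len e))"

definition mu :: "'x set \<Rightarrow> 'v set set \<Rightarrow> ('x \<Rightarrow> 'v) \<Rightarrow> ('v set \<Rightarrow> real) \<Rightarrow> 'x set \<Rightarrow> real" where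
  "mu X E \<phi> len A = (if even (card A)
     then (\<Sum>B\<in>{B. B \<subseteq> X \<and> odd (card (A \<inter> B))}. wtilde X E \<phi> len B) else 0)"

end

theory Submission
  imports Defs "HOL-Library.Transitive_Closure_Table"
begin

lemma sum_pow_card:
  fixes x :: real
  assumes "finite S"
  shows "(\<Sum>C\<in>Pow S. x ^ card C) = (1 + x) ^ card S"
  using assms
proof (induction S rule: finite_induct)
  case empty then show ?case by simp
next
  case (insert a S)
  have "(\<Sum>C\<in>Pow (insert a S). x ^ card C) = (\<Sum>C\<in>Pow S. x ^ card C) + (\<Sum>C\<in>insert a ` Pow S. x ^ card C)"
    unfolding Pow_insert by (rule sum.union_disjoint) (use insert.hyps in auto)
  also have "(\<Sum>C\<in>insert a ` Pow S. x ^ card C) = (\<Sum>C\<in>Pow S. x ^ card (insert a C))"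
    by (rule sum.reindex_cong[where l="insert a"]) (use insert.hyps in \<open>auto simp: inj_on_def\<close>)
  also have "\<dots> = (\<Sum>C\<in>Pow S. x * x ^ card C)"
    by (rule sum.cong) (use insert.hyps in \<open>auto simp: card_insert_if finite_subset\<close>)
  finally show ?case using insert by (simp add: sum_distrib_left[symmetric] card_insert_if algebra_simps)
qed

lemma sum_Pow_split:
  fixes F G :: "'a set \<Rightarrow> real"
  assumes "finite A"
  shows "(\<Sum>C\<in>Pow A. F (C \<inter> B) * G (C - B)) = (\<Sum>C1\<in>Pow (A \<inter> B). F C1) * (\<Sum>C2\<in>Pow (A - B). G C2)"
proof -
  have "(\<Sum>C\<in>Pow A. F (C \<inter> B) * G (C - B)) = (\<Sum>p\<in>Pow (A \<inter> B) \<times> Pow (A - B). F (fst p) * G (snd p))"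
    by (rule sum.reindex_bij_witness[where i="\<lambda>p. fst p \<union> snd p" and j="\<lambda>C. (C \<inter> B, C - B)"]) auto
  also have "\<dots> = (\<Sum>C1\<in>Pow (A \<inter> B). \<Sum>C2\<in>Pow (A - B). F C1 * G C2)"
    by (simp add: sum.cartesian_product case_prod_unfold)
  also have "\<dots> = (\<Sum>C1\<in>Pow (A \<inter> B). F C1) * (\<Sum>C2\<in>Pow (A - B). G C2)"
    by (simp add: sum_product)
  finally show ?thesis .
qed


lemma powi_m2: "(x::real) \<noteq> 0 \<Longrightarrow> x powi (int n - 2) = x ^ n / 4 * (4 / x^2)"
  by (simp add: power_int_diff power_int_of_nat)

lemma zp: "n \<noteq> 0 \<Longrightarrow> (0::real) ^ n = 0" by simp

lemma sum_odd_ind: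
  assumes "finite S"
  shows "(\<Sum>C\<in>Pow S. (if odd (card C) then 1 else 0::real)) = (2 ^ card S - 0 ^ card S) / 2"
proof -
  have "(\<Sum>C\<in>Pow S. (if odd (card C) then 1 else 0::real)) = (\<Sum>C\<in>Pow S. (1 - (-1) ^ card C) / 2)"
    by (rule sum.cong) auto
  also have "\<dots> = ((\<Sum>C\<in>Pow S. 1) - (\<Sum>C\<in>Pow S. (-1::real) ^ card C)) / 2"
    by (simp only: sum_subtractf[symmetric] sum_divide_distrib)
  also have "\<dots> = (2 ^ card S - 0 ^ card S) / 2"
    using sum_pow_card[OF assms, of "-1"] assms by (simp add: card_Pow)
  finally show ?thesis .
qed

lemma sum_nonempty_m2:
  assumes "finite S"
  shows "(\<Sum>C\<in>Pow S. (((-2::real) ^ card C - (if C = {} then 1 else 0)) / 2)) = ((-1) ^ card S - 1) / 2"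
proof -
  have "(\<Sum>C\<in>Pow S. (((-2::real) ^ card C - (if C = {} then 1 else 0)) / 2)) =
     ((\<Sum>C\<in>Pow S. (-2::real) ^ card C) - (\<Sum>C\<in>Pow S. (if C = {} then 1 else 0))) / 2"
    by (simp only: sum_subtractf[symmetric] sum_divide_distrib)
  also have "(\<Sum>C\<in>Pow S. (if C = {} then 1 else 0::real)) = 1"
    using assms by (simp add: sum.delta)
  finally show ?thesis using sum_pow_card[OF assms, of "-2"] by simp
qed

lemma coef1:
  assumes "finite A"
  shows "(\<Sum>C\<in>Pow A. (-2::real) powi (int (card C) - 2) * (if C \<inter> B \<noteq> {} \<and> C - B \<noteq> {} then 1 else 0))
     = (if odd (card (A \<inter> B)) \<and> odd (card (A - B)) then 1 else 0)"
proof -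
  define F where "F = (\<lambda>D::'a set. (((-2::real) ^ card D - (if D = {} then 1 else 0)) / 2))"
  have "(\<Sum>C\<in>Pow A. (-2::real) powi (int (card C) - 2) * (if C \<inter> B \<noteq> {} \<and> C - B \<noteq> {} then 1 else 0))
      = (\<Sum>C\<in>Pow A. F (C \<inter> B) * F (C - B))"
  proof (rule sum.cong)
    fix C assume "C \<in> Pow A"
    then have fC: "finite C" using assms finite_subset by auto
    then have cc: "card C = card (C \<inter> B) + card (C - B)"
      by (rule card_Int_Diff)
    show "(-2::real) powi (int (card C) - 2) * (if C \<inter> B \<noteq> {} \<and> C - B \<noteq> {} then 1 else 0) = F (C \<inter> B) * F (C - B)"
    proof (cases "C \<inter> B = {} \<or> C - B = {}")
      case True
      have F0: "F {} = 0" by (simp add: F_def)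
      from True show ?thesis
      proof
        assume h: "C \<inter> B = {}" show ?thesis by (subst h)+ (simp add: F0)
      next
        assume h: "C - B = {}" show ?thesis by (subst h)+ (simp add: F0)
      qed
    next
      case False
      have f1: "F (C \<inter> B) = (-2)^card (C \<inter> B) / 2" using False by (simp add: F_def)
      have f2: "F (C - B) = (-2)^card (C - B) / 2" using False by (simp add: F_def)
      have pw: "(-2::real) powi (int (card C) - 2) = (-2)^card (C \<inter> B) * (-2)^card (C - B) / 4"
      proof -
        have "(-2::real) powi (int (card C) - 2) = (-2)^card C / 4" by (simp add: powi_m2)
        also have "(-2::real)^card C = (-2)^card (C \<inter> B) * (-2)^card (C - B)" by (subst cc) (simp add: power_add)
        finally show ?thesis .
      qed
      show ?thesis using False by (simp only: f1 f2 pw if_True de_Morgan_disj[symmetric]) simp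
    qed
  qed simp
  also have "\<dots> = (\<Sum>C1\<in>Pow (A \<inter> B). F C1) * (\<Sum>C2\<in>Pow (A - B). F C2)"
    by (rule sum_Pow_split[OF assms])
  also have "\<dots> = ((-1) ^ card (A \<inter> B) - 1) / 2 * (((-1) ^ card (A - B) - 1) / 2)"
    unfolding F_def by (simp only: sum_nonempty_m2[OF finite_Int[OF disjI1[OF assms]]] sum_nonempty_m2[OF finite_Diff[OF assms]])
  also have "\<dots> = (if odd (card (A \<inter> B)) \<and> odd (card (A - B)) then 1 else 0)"
    by (auto simp: neg_one_even_power neg_one_odd_power)
  finally show ?thesis .
qed

lemma coef2:
  assumes "finite B"
  shows "(\<Sum>C\<in>Pow B. (if odd (card (C \<inter> D)) \<and> odd (card (C - D)) then 1 else 0::real))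
     = 2 powi (int (card B) - 2) * (if B \<inter> D \<noteq> {} \<and> B - D \<noteq> {} then 1 else 0)"
proof -
  have cc: "card B = card (B \<inter> D) + card (B - D)"
    using assms by (rule card_Int_Diff)
  have "(\<Sum>C\<in>Pow B. (if odd (card (C \<inter> D)) \<and> odd (card (C - D)) then 1 else 0::real))
     = (\<Sum>C\<in>Pow B. (if odd (card (C \<inter> D)) then 1 else 0) * (if odd (card (C - D)) then 1 else 0::real))"
    by (rule sum.cong) auto
  also have "\<dots> = (\<Sum>C1\<in>Pow (B \<inter> D). (if odd (card C1) then 1 else 0)) * (\<Sum>C2\<in>Pow (B - D). (if odd (card C2) then 1 else 0::real))"
    by (rule sum_Pow_split[OF assms, where F="\<lambda>C. if odd (card C) then 1 else 0" and G="\<lambda>C. if odd (card C) then 1 else 0"])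
  also have "\<dots> = (2 ^ card (B \<inter> D) - 0 ^ card (B \<inter> D)) / 2 * ((2 ^ card (B - D) - 0 ^ card (B - D)) / 2)"
    by (simp only: sum_odd_ind[OF finite_Int[OF disjI1[OF assms]]] sum_odd_ind[OF finite_Diff[OF assms]])
  also have "\<dots> = 2 powi (int (card B) - 2) * (if B \<inter> D \<noteq> {} \<and> B - D \<noteq> {} then 1 else 0)"
  proof -
    have k: "(B \<inter> D = {}) = (card (B \<inter> D) = 0)" using assms by simp
    have m: "(B - D = {}) = (card (B - D) = 0)" using assms by simp
    have pw: "(2::real) powi (int (card B) - 2) = 2 ^ card (B \<inter> D) * 2 ^ card (B - D) / 4"
    proof -
      have "(2::real) powi (int (card B) - 2) = 2^card B / 4" by (simp add: powi_m2)
      also have "(2::real)^card B = 2^card (B \<inter> D) * 2^card (B - D)" by (subst cc) (simp add: power_add)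
      finally show ?thesis .
    qed
    show ?thesis
    proof (cases "card (B \<inter> D) = 0 \<or> card (B - D) = 0")
      case True
      then have c: "\<not> (B \<inter> D \<noteq> {} \<and> B - D \<noteq> {})" using k m by blast
      have z: "(if B \<inter> D \<noteq> {} \<and> B - D \<noteq> {} then 1 else 0::real) = 0" by (rule if_not_P[OF c])
      have l: "(2 ^ card (B \<inter> D) - 0 ^ card (B \<inter> D)) / 2 * ((2 ^ card (B - D) - 0 ^ card (B - D)) / 2) = (0::real)"
        using True by auto
      show ?thesis by (simp only: z l mult_zero_right)
    next
      case False
      then have z1: "(0::real)^card (B \<inter> D) = 0" and z2: "(0::real)^card (B - D) = 0" by simp_all
      have cd: "B \<inter> D \<noteq> {} \<and> B - D \<noteq> {}" using k m False by blast
      show ?thesis by (simp only: z1 z2 if_P[OF cd] pw diff_zero)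
    qed
  qed
  finally show ?thesis .
qed

lemma sA_ind:
  assumes "finite X" "C \<subseteq> X"
  shows "sA X p C = (\<Sum>B\<in>Pow X. p B * (if C \<inter> B \<noteq> {} \<and> C - B \<noteq> {} then 1 else 0))"
proof -
  have "Sfam X C = {B \<in> Pow X. C \<inter> B \<noteq> {} \<and> C - B \<noteq> {}}"
    unfolding Sfam_def using assms by blast
  then have "sA X p C = sum p {B \<in> Pow X. C \<inter> B \<noteq> {} \<and> C - B \<noteq> {}}" unfolding sA_def by simp
  also have "\<dots> = (\<Sum>B\<in>Pow X. if C \<inter> B \<noteq> {} \<and> C - B \<noteq> {} then p B else 0)"
    using assms by (simp only: sum.inter_filter finite_Pow_iff)
  finally show ?thesis by (simp add: if_distrib cong: if_cong)
qed

lemma gamma_ind: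
  assumes "finite X" "A \<subseteq> X"
  shows "gamma X p A = (\<Sum>B\<in>Pow X. p B * (if odd (card (A \<inter> B)) \<and> odd (card (A - B)) then 1 else 0))"
proof (cases "even (card A)")
  case False
  have "\<And>B. card A = card (A \<inter> B) + card (A - B)"
    using assms by (meson card_Int_Diff finite_subset)
  then have nb: "\<And>B. \<not> (odd (card (A \<inter> B)) \<and> odd (card (A - B)))" using False by (metis odd_add)
  have "(\<Sum>B\<in>Pow X. p B * (if odd (card (A \<inter> B)) \<and> odd (card (A - B)) then 1 else 0)) = 0"
    by (rule sum.neutral) (use nb in auto)
  then show ?thesis using False unfolding gamma_def by simp
next
  case True
  have cc: "\<And>B. card A = card (A \<inter> B) + card (A - B)"
    using assms by (meson card_Int_Diff finite_subset)
  define Od where "Od = {B. B \<subseteq> X \<and> odd (card (A \<inter> B))}"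
  have fO: "finite Od" unfolding Od_def using assms by simp
  have ob: "\<And>B. B \<in> Od \<Longrightarrow> X - B \<in> Od \<and> X - (X - B) = B"
  proof -
    fix B assume "B \<in> Od"
    then have "B \<subseteq> X" "odd (card (A \<inter> B))" unfolding Od_def by auto
    moreover have "A \<inter> (X - B) = A - B" using assms by blast
    ultimately show "X - B \<in> Od \<and> X - (X - B) = B" unfolding Od_def using True cc[of B] by auto
  qed
  have rx: "(\<Sum>B\<in>Od. p (X - B)) = (\<Sum>B\<in>Od. p B)"
    by (rule sum.reindex_bij_witness[where i="\<lambda>B. X - B" and j="\<lambda>B. X - B"]) (use ob in simp_all)
  have "gamma X p A = (\<Sum>B\<in>Od. ptilde X p B)" using True unfolding gamma_def Od_def by simp
  also have "\<dots> = ((\<Sum>B\<in>Od. p B) + (\<Sum>B\<in>Od. p (X - B))) / 2"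
    unfolding ptilde_def by (simp only: sum.distrib[symmetric] sum_divide_distrib)
  also have "\<dots> = (\<Sum>B\<in>Od. p B)" by (simp add: rx)
  also have "(\<Sum>B\<in>Od. p B) = (\<Sum>B\<in>Pow X. p B * (if odd (card (A \<inter> B)) then 1 else 0))"
  proof -
    have "Od = {B \<in> Pow X. odd (card (A \<inter> B))}" unfolding Od_def by auto
    then have "sum p Od = (\<Sum>B\<in>Pow X. if odd (card (A \<inter> B)) then p B else 0)"
      using assms by (simp only: sum.inter_filter finite_Pow_iff)
    then show ?thesis by (simp add: if_distrib cong: if_cong)
  qed
  also have "\<dots> = (\<Sum>B\<in>Pow X. p B * (if odd (card (A \<inter> B)) \<and> odd (card (A - B)) then 1 else 0))"
  proof (rule sum.cong)
    fix B
    have "odd (card (A \<inter> B)) \<longleftrightarrow> odd (card (A - B))" using True cc[of B] by (metis even_add)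
    then show "p B * (if odd (card (A \<inter> B)) then 1 else 0) = p B * (if odd (card (A \<inter> B)) \<and> odd (card (A - B)) then 1 else 0)"
      by simp
  qed simp
  finally show ?thesis by simp
qed

lemma L1:
  assumes "finite X" "A \<subseteq> X"
  shows "gamma X p A = (\<Sum>C\<in>Pow A. (-2) powi (int (card C) - 2) * sA X p C)"
proof -
  have fA: "finite A" using assms finite_subset by auto
  have "(\<Sum>C\<in>Pow A. (-2) powi (int (card C) - 2) * sA X p C)
      = (\<Sum>C\<in>Pow A. \<Sum>B\<in>Pow X. p B * ((-2) powi (int (card C) - 2) * (if C \<inter> B \<noteq> {} \<and> C - B \<noteq> {} then 1 else 0)))"
    by (rule sum.cong) (use assms in \<open>auto simp: sA_ind sum_distrib_left mult_ac intro!: sum.cong\<close>)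
  also have "\<dots> = (\<Sum>B\<in>Pow X. p B * (\<Sum>C\<in>Pow A. (-2) powi (int (card C) - 2) * (if C \<inter> B \<noteq> {} \<and> C - B \<noteq> {} then 1 else 0)))"
    by (subst sum.swap) (simp add: sum_distrib_left)
  also have "\<dots> = gamma X p A"
    by (simp only: coef1[OF fA] gamma_ind[OF assms])
  finally show ?thesis by simp
qed

lemma L2:
  assumes "finite X" "B \<subseteq> X"
  shows "sA X p B = (1 / (2 powi (int (card B) - 2))) * (\<Sum>C\<in>Pow B. gamma X p C)"
proof -
  have fB: "finite B" using assms finite_subset by auto
  have "(\<Sum>C\<in>Pow B. gamma X p C)
     = (\<Sum>C\<in>Pow B. \<Sum>D\<in>Pow X. p D * (if odd (card (C \<inter> D)) \<and> odd (card (C - D)) then 1 else 0))"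
    by (rule sum.cong) (use assms in \<open>auto simp: gamma_ind\<close>)
  also have "\<dots> = (\<Sum>D\<in>Pow X. p D * (\<Sum>C\<in>Pow B. (if odd (card (C \<inter> D)) \<and> odd (card (C - D)) then 1 else 0)))"
    by (subst sum.swap) (simp add: sum_distrib_left)
  also have "\<dots> = (\<Sum>D\<in>Pow X. p D * (2 powi (int (card B) - 2) * (if B \<inter> D \<noteq> {} \<and> B - D \<noteq> {} then 1 else 0)))"
    by (simp only: coef2[OF fB])
  also have "\<dots> = 2 powi (int (card B) - 2) * (\<Sum>D\<in>Pow X. p D * (if B \<inter> D \<noteq> {} \<and> B - D \<noteq> {} then 1 else 0))"
    by (simp only: sum_distrib_left mult.left_commute)
  also have "\<dots> = 2 powi (int (card B) - 2) * sA X p B"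
    by (simp only: sA_ind[OF assms])
  finally show ?thesis by simp
qed


lemma adj_iff: "(u,w) \<in> adj F \<longleftrightarrow> {u,w} \<in> F" by (simp add: adj_def)

lemma adj_sym: "(u,w) \<in> adj F \<Longrightarrow> (w,u) \<in> adj F" by (simp add: adj_def insert_commute)

lemma rt_sym: "(u,w) \<in> (adj F)\<^sup>* \<Longrightarrow> (w,u) \<in> (adj F)\<^sup>*"
proof (induction rule: rtrancl_induct)
  case base then show ?case by simp
next
  case (step w w')
  then show ?case by (meson adj_sym converse_rtrancl_into_rtrancl)
qed

lemma rt_mono: "F \<subseteq> G \<Longrightarrow> (u,w) \<in> (adj F)\<^sup>* \<Longrightarrow> (u,w) \<in> (adj G)\<^sup>*"
proof -
  assume "F \<subseteq> G" "(u,w) \<in> (adj F)\<^sup>*"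
  moreover have "adj F \<subseteq> adj G" using \<open>F \<subseteq> G\<close> by (auto simp: adj_def)
  ultimately show ?thesis using rtrancl_mono by blast
qed

lemma two_elems: "finite S \<Longrightarrow> 2 \<le> card S \<Longrightarrow> \<exists>x\<in>S. \<exists>y\<in>S. x \<noteq> y"
  using card_le_Suc0_iff_eq by fastforce

locale ptree =
  fixes X :: "'x set" and V :: "'v set" and E :: "'v set set" and \<phi> :: "'x \<Rightarrow> 'v"
  assumes fX: "finite X" and pt: "phylo_tree X V E \<phi>"
begin

definition K :: "'v set \<Rightarrow> 'v \<Rightarrow> 'v set" where "K g p = {w. (p,w) \<in> (adj (E - {g}))\<^sup>*}"

lemma tree: "is_tree V E" using pt phylo_tree_def by auto
lemma fV: "finite V" using tree by (simp add: is_tree_def simple_graph_def)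
lemma edgeV: "e \<in> E \<Longrightarrow> e \<subseteq> V" using tree by (simp add: is_tree_def simple_graph_def)
lemma edge2: "e \<in> E \<Longrightarrow> card e = 2" using tree by (simp add: is_tree_def simple_graph_def)
lemma fE: "finite E"
proof -
  have "E \<subseteq> Pow V" using edgeV by auto
  then show ?thesis using fV finite_subset by auto
qed
lemma conn: "u \<in> V \<Longrightarrow> w \<in> V \<Longrightarrow> (u,w) \<in> (adj E)\<^sup>*"
  using tree by (simp add: is_tree_def connected_graph_def)
lemma acyc: "\<not> has_cycle V E" using tree by (simp add: is_tree_def)
lemma bij: "bij_betw \<phi> X (leaves V E)" using pt phylo_tree_def by auto
lemma phiV: "x \<in> X \<Longrightarrow> \<phi> x \<in> V" using bij by (auto simp: bij_betw_def leaves_def)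
lemma leafX: "l \<in> leaves V E \<Longrightarrow> \<exists>z\<in>X. l = \<phi> z" using bij by (auto simp: bij_betw_def)
lemma leafV: "l \<in> leaves V E \<Longrightarrow> l \<in> V" by (simp add: leaves_def)
lemma intdeg: "v \<in> V \<Longrightarrow> v \<notin> leaves V E \<Longrightarrow> 3 \<le> degree E v"
  using pt by (auto simp: phylo_tree_def)

lemma edge_ab: "{a,b} \<in> E \<Longrightarrow> a \<noteq> b"
  using edge2 by fastforce
lemma edge_in: "{a,b} \<in> E \<Longrightarrow> a \<in> V \<and> b \<in> V" using edgeV by auto

lemma edge_at: "g \<in> E \<Longrightarrow> v \<in> g \<Longrightarrow> \<exists>n. g = {v,n}"
proof -
  assume "g \<in> E" "v \<in> g"
  then obtain p q where "g = {p,q}" using edge2 card_2_iff by metis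
  then show ?thesis using \<open>v \<in> g\<close> by (auto simp: insert_commute)
qed

lemma reachV: "(p,w) \<in> (adj F)\<^sup>* \<Longrightarrow> F \<subseteq> E \<Longrightarrow> p \<in> V \<Longrightarrow> w \<in> V"
proof (induction rule: rtrancl_induct)
  case base then show ?case by simp
next
  case (step w w')
  then have "{w,w'} \<in> E" by (auto simp: adj_def)
  then show ?case using edge_in by auto
qed

lemma KV: "p \<in> V \<Longrightarrow> K g p \<subseteq> V"
  unfolding K_def using reachV by blast
lemma K_refl: "p \<in> K g p" by (simp add: K_def)
lemma K_clos: "w \<in> K g p \<Longrightarrow> {w,w'} \<in> E \<Longrightarrow> {w,w'} \<noteq> g \<Longrightarrow> w' \<in> K g p"
  unfolding K_def by (auto simp: adj_def intro: rtrancl_into_rtrancl)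
lemma K_trans: "b \<in> K g c \<Longrightarrow> K g b \<subseteq> K g c"
  unfolding K_def by (auto intro: rtrancl_trans)
lemma K_sym: "b \<in> K g c \<Longrightarrow> c \<in> K g b"
  unfolding K_def by (auto intro: rt_sym)

lemma EO2: "{a,b} \<in> E \<Longrightarrow> b \<notin> K {a,b} a"
proof
  assume ab_E: "{a,b} \<in> E" and bK: "b \<in> K {a,b} a"
  define g where "g = {a,b}"
  define r where "r = (\<lambda>x y. (x,y) \<in> adj (E - {g}))"
  have ab: "a \<noteq> b" using edge_ab ab_E by simp
  have "(a,b) \<in> (adj (E - {g}))\<^sup>*" using bK unfolding K_def g_def by simp
  then have "r\<^sup>*\<^sup>* a b" unfolding r_def by (simp add: rtranclp_rtrancl_eq)
  then obtain xs where xs: "rtrancl_path r a xs b" by (auto simp: rtranclp_eq_rtrancl_path)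
  then obtain ys where P: "rtrancl_path r a ys b" and D: "distinct (a # ys)"
    using rtrancl_path_distinct by metis
  have ne: "ys \<noteq> []" using P ab by (cases rule: rtrancl_path.cases) auto
  have lastb: "last ys = b" using rtrancl_path_last P ne by metis
  have step: "\<And>i. i < length ys \<Longrightarrow> {(a#ys)!i, ys!i} \<in> E - {g}"
    using rtrancl_path_nth[OF P] unfolding r_def adj_def by auto
  have len: "length ys \<ge> 2"
  proof (rule ccontr)
    assume "\<not> length ys \<ge> 2"
    moreover have "length ys > 0" using ne by simp
    ultimately have "length ys = 1" by linarith
    then have "ys = [b]" using lastb by (cases ys) auto
    then have "{a,b} \<in> E - {g}" using step[of 0] by simp
    then show False unfolding g_def by simp
  qed
  have "has_cycle V E"
    unfolding has_cycle_def
  proof (intro exI[of _ "a # ys"] conjI allI impI)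
    show "3 \<le> length (a # ys)" using len by simp
    show "distinct (a # ys)" by (rule D)
    show "set (a#ys) \<subseteq> V"
    proof
      fix z assume "z \<in> set (a # ys)"
      then have "z = a \<or> (\<exists>i<length ys. z = ys ! i)" by (auto simp: in_set_conv_nth)
      then show "z \<in> V"
      proof
        assume "z = a" then show ?thesis using edge_in ab_E by simp
      next
        assume "\<exists>i<length ys. z = ys ! i"
        then obtain i where "i < length ys" "z = ys ! i" by blast
        then show ?thesis using step edgeV by blast
      qed
    qed
    fix i assume i: "i < length (a # ys)"
    show "{(a # ys) ! i, (a # ys) ! ((i + 1) mod length (a # ys))} \<in> E"
    proof (cases "i < length ys")
      case True
      then have "(i+1) mod length (a#ys) = i+1" by simp
      then show ?thesis using step[OF True] by simp
    next
      case False
      then have il: "i = length ys" using i by simp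
      then have "(a#ys)!i = b" using lastb ne by (simp add: last_conv_nth)
      moreover have "(i+1) mod length (a#ys) = 0" using il by simp
      ultimately show ?thesis using ab_E by (simp add: insert_commute)
    qed
  qed
  with acyc show False by simp
qed

lemma EO2': "{a,b} \<in> E \<Longrightarrow> a \<notin> K {a,b} b"
  using EO2[of b a] by (simp add: insert_commute)

lemma EO1: "{a,b} \<in> E \<Longrightarrow> w \<in> V \<Longrightarrow> w \<in> K {a,b} a \<or> w \<in> K {a,b} b"
proof -
  assume ab: "{a,b} \<in> E" "w \<in> V"
  have "(a,w) \<in> (adj E)\<^sup>*" using conn edge_in ab by auto
  then show ?thesis
  proof (induction rule: rtrancl_induct)
    case base show ?case by (simp add: K_refl)
  next
    case (step w w')
    then have e: "{w,w'} \<in> E" by (simp add: adj_def)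
    show ?case
    proof (cases "{w,w'} = {a,b}")
      case True then have "w' = a \<or> w' = b" by (auto simp: doubleton_eq_iff)
      then show ?thesis using K_refl by auto
    next
      case False then show ?thesis using step.IH K_clos[OF _ e False] by blast
    qed
  qed
qed

lemma Disj: "{a,b} \<in> E \<Longrightarrow> w \<in> K {a,b} a \<Longrightarrow> w \<in> K {a,b} b \<Longrightarrow> False"
proof -
  assume ab: "{a,b} \<in> E" "w \<in> K {a,b} a" "w \<in> K {a,b} b"
  then have "b \<in> K {a,b} w" using K_sym by blast
  then have "b \<in> K {a,b} a" using K_trans ab(2) K_sym by blast
  then show False using EO2 ab(1) by blast
qed

lemma FS: "w \<in> K e v \<Longrightarrow> w \<noteq> v \<Longrightarrow> \<exists>n. {v,n} \<in> E \<and> {v,n} \<noteq> e \<and> w \<in> K {v,n} n"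
proof -
  assume w: "w \<in> K e v" "w \<noteq> v"
  have "(v,w) \<in> (adj (E - {e}))\<^sup>*" using w unfolding K_def by simp
  then have "w = v \<or> (\<exists>n. {v,n} \<in> E \<and> {v,n} \<noteq> e \<and> w \<in> K {v,n} n)"
  proof (induction rule: rtrancl_induct)
    case base then show ?case by simp
  next
    case (step w w')
    then have e1: "{w,w'} \<in> E" "{w,w'} \<noteq> e" by (auto simp: adj_def)
    show ?case
    proof (cases "w = v")
      case True then show ?thesis using e1 K_refl by blast
    next
      case False
      with step.IH obtain n where n: "{v,n} \<in> E" "{v,n} \<noteq> e" "w \<in> K {v,n} n" by blast
      show ?thesis
      proof (cases "{w,w'} = {v,n}")
        case True then have "w' = v" using False by (auto simp: doubleton_eq_iff)
        then show ?thesis by simp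
      next
        case F2: False
        then show ?thesis using n K_clos[OF n(3) e1(1) F2] by blast
      qed
    qed
  qed
  with w show ?thesis by auto
qed

lemma two_edges:
  assumes "v \<in> V" "v \<notin> leaves V E"
  shows "\<exists>n1 n2. {v,n1} \<in> E \<and> {v,n2} \<in> E \<and> {v,n1} \<noteq> {v,n2} \<and> {v,n1} \<noteq> e \<and> {v,n2} \<noteq> e"
proof -
  define S where "S = {g\<in>E. v \<in> g}"
  have fS: "finite S" using fE S_def by simp
  have "3 \<le> card S" using intdeg[OF assms] unfolding S_def degree_def by simp
  then have "2 \<le> card (S - {e})" using fS by (cases "e \<in> S") (simp_all add: card_Diff_singleton_if)
  then have "\<exists>x\<in>S - {e}. \<exists>y\<in>S - {e}. x \<noteq> y" by (intro two_elems) (use fS in simp_all)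
  then obtain g1 g2 where g: "g1 \<in> S - {e}" "g2 \<in> S - {e}" "g1 \<noteq> g2" by blast
  have gE: "g1 \<in> E" "g2 \<in> E" "v \<in> g1" "v \<in> g2" "g1 \<noteq> e" "g2 \<noteq> e" using g unfolding S_def by simp_all
  obtain n1 where n1: "g1 = {v,n1}" using edge_at gE by blast
  obtain n2 where n2: "g2 = {v,n2}" using edge_at gE by blast
  show ?thesis
    by (rule exI[of _ n1], rule exI[of _ n2]) (use gE g(3) n1 n2 in simp)
qed

lemma Mono: "h \<in> E \<Longrightarrow> h \<noteq> g \<Longrightarrow> (\<forall>z\<in>h. z \<notin> K g c) \<Longrightarrow> K g c \<subseteq> K h c"
proof
  fix w assume h: "h \<in> E" "h \<noteq> g" "\<forall>z\<in>h. z \<notin> K g c" and w: "w \<in> K g c"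
  have "(c,w) \<in> (adj (E - {g}))\<^sup>*" using w unfolding K_def by simp
  then have "(c,w) \<in> (adj (E - {h}))\<^sup>*"
  proof (induction rule: rtrancl_induct)
    case base then show ?case by simp
  next
    case (step w w')
    then have "w \<in> K g c" unfolding K_def by simp
    then have "w \<notin> h" using h by blast
    then have "{w,w'} \<noteq> h" by auto
    then have "(w,w') \<in> adj (E - {h})" using step by (auto simp: adj_def)
    then show ?case by (rule rtrancl_into_rtrancl[OF step.IH])
  qed
  then show "w \<in> K h c" unfolding K_def by simp
qed

lemma SubSide:
  assumes e: "{u,v} \<in> E" and g: "{v,n} \<in> E" "{v,n} \<noteq> {u,v}"
  shows "K {v,n} n \<subseteq> K {u,v} v \<and> v \<notin> K {v,n} n"
proof
  show vn: "v \<notin> K {v,n} n" using EO2' g by blast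
  have e': "{v,u} \<in> E" using e by (simp add: insert_commute)
  have ne: "{v,u} \<noteq> {v,n}" using g(2) by (simp add: insert_commute)
  have "u \<in> K {v,n} v" using K_clos[OF K_refl e' ne] .
  then have "u \<notin> K {v,n} n" using Disj g(1) by blast
  then have all: "\<forall>z\<in>{u,v}. z \<notin> K {v,n} n" using vn by simp
  have "K {v,n} n \<subseteq> K {u,v} n" using Mono[OF e g(2)[symmetric] all] .
  moreover have "n \<in> K {u,v} v" using K_clos[OF K_refl g(1) g(2)] .
  ultimately show "K {v,n} n \<subseteq> K {u,v} v" using K_trans by blast
qed

lemma Leaf1: "{u,v} \<in> E \<Longrightarrow> \<exists>l\<in>leaves V E. l \<in> K {u,v} v"
proof (induction "card (K {u,v} v)" arbitrary: u v rule: less_induct)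
  case less
  have vV: "v \<in> V" using edge_in less.prems by simp
  show ?case
  proof (cases "v \<in> leaves V E")
    case True then show ?thesis using K_refl by blast
  next
    case False
    then obtain n where g: "{v,n} \<in> E" "{v,n} \<noteq> {u,v}" using two_edges[OF vV False, of "{u,v}"] by blast
    have sub: "K {v,n} n \<subseteq> K {u,v} v" "v \<notin> K {v,n} n" using SubSide[OF less.prems g] by auto
    have fin: "finite (K {u,v} v)" using KV[OF vV] fV finite_subset by blast
    have "K {v,n} n \<subset> K {u,v} v" using sub K_refl[of v "{u,v}"] by blast
    then have "card (K {v,n} n) < card (K {u,v} v)" by (rule psubset_card_mono[OF fin])
    then obtain l where "l \<in> leaves V E" "l \<in> K {v,n} n" using less.hyps[OF _ g(1)] by blast
    then show ?thesis using sub by blast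
  qed
qed

lemma Q:
  assumes "{u,v} \<in> E" "{x,y} \<in> E" "{u,v} \<noteq> {x,y}" "K {x,y} y \<subseteq> K {u,v} v"
  shows "\<exists>l\<in>leaves V E. l \<in> K {u,v} v \<and> l \<notin> K {x,y} y"
  using assms
proof (induction "card (K {u,v} v)" arbitrary: u v rule: less_induct)
  case less
  note e = less.prems(1) and f = less.prems(2) and ef = less.prems(3) and sub0 = less.prems(4)
  have vV: "v \<in> V" using edge_in e by simp
  have vnot: "v \<notin> K {x,y} y"
  proof
    assume a: "v \<in> K {x,y} y"
    have e': "{v,u} \<in> E" using e by (simp add: insert_commute)
    have ne: "{v,u} \<noteq> {x,y}" using ef by (simp add: insert_commute)
    have "u \<in> K {x,y} y" using K_clos[OF a e' ne] .
    then have "u \<in> K {u,v} v" using sub0 by blast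
    then show False using EO2'[OF e] by blast
  qed
  show ?case
  proof (cases "v \<in> leaves V E")
    case True then show ?thesis using K_refl[of v "{u,v}"] vnot by blast
  next
    case False
    then obtain n1 n2 where g: "{v,n1} \<in> E" "{v,n2} \<in> E" "{v,n1} \<noteq> {v,n2}" "{v,n1} \<noteq> {u,v}" "{v,n2} \<noteq> {u,v}"
      using two_edges[OF vV False, of "{u,v}"] by blast
    show ?thesis
    proof (cases "x = v")
      case True
      have "\<exists>n. {v,n} \<in> E \<and> {v,n} \<noteq> {u,v} \<and> {v,n} \<noteq> {x,y}"
      proof (cases "{v,n1} = {x,y}")
        case T: True
        have "{v,n2} \<noteq> {x,y}" unfolding T[symmetric] using g(3) by metis
        then show ?thesis using g(2,5) by blast
      next
        case False then show ?thesis using g(1,4) by blast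
      qed
      then obtain n where gn: "{v,n} \<in> E" "{v,n} \<noteq> {u,v}" "{v,n} \<noteq> {x,y}" by blast
      obtain l where l: "l \<in> leaves V E" "l \<in> K {v,n} n" using Leaf1[OF gn(1)] by blast
      have sub: "K {v,n} n \<subseteq> K {u,v} v" "v \<notin> K {v,n} n" using SubSide[OF e gn(1,2)] by auto
      have f': "{v,y} \<in> E" using f True by simp
      have ne1: "{v,y} \<noteq> {v,n}" using gn(3) True by auto
      have "y \<in> K {v,n} v" using K_clos[OF K_refl f' ne1] .
      then have "y \<notin> K {v,n} n" using Disj[OF gn(1)] by blast
      then have all: "\<forall>z\<in>{x,y}. z \<notin> K {v,n} n" using sub(2) True by simp
      have k1: "K {v,n} n \<subseteq> K {x,y} n" using Mono[OF f gn(3)[symmetric] all] .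
      have ne2: "{v,n} \<noteq> {x,y}" using gn(3) .
      have "n \<in> K {x,y} v" using K_clos[OF K_refl gn(1) ne2] .
      then have k2: "K {x,y} n \<subseteq> K {x,y} x" using K_trans True by simp
      have "l \<in> K {x,y} x" using l(2) k1 k2 by blast
      then have "l \<notin> K {x,y} y" using Disj[OF f] by blast
      then show ?thesis using l sub by blast
    next
      case False
      have yK: "y \<in> K {u,v} v" using sub0 K_refl[of y "{x,y}"] by blast
      have yv: "y \<noteq> v" using vnot K_refl[of y "{x,y}"] by auto
      obtain n where gn: "{v,n} \<in> E" "{v,n} \<noteq> {u,v}" "y \<in> K {v,n} n" using FS[OF yK yv] by blast
      have gf: "{v,n} \<noteq> {x,y}" using False yv by (auto simp: doubleton_eq_iff)
      have nnot: "n \<notin> K {x,y} y"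
      proof
        assume a: "n \<in> K {x,y} y"
        have e': "{n,v} \<in> E" using gn(1) by (simp add: insert_commute)
        have ne: "{n,v} \<noteq> {x,y}" using gf by (simp add: insert_commute)
        have "v \<in> K {x,y} y" using K_clos[OF a e' ne] .
        then show False using vnot by blast
      qed
      have all: "\<forall>z\<in>{v,n}. z \<notin> K {x,y} y" using vnot nnot by simp
      have "K {x,y} y \<subseteq> K {v,n} y" using Mono[OF gn(1) gf all] .
      moreover have "K {v,n} y \<subseteq> K {v,n} n" using K_trans[OF gn(3)] .
      ultimately have sub1: "K {x,y} y \<subseteq> K {v,n} n" by (rule subset_trans)
      have sub: "K {v,n} n \<subseteq> K {u,v} v" "v \<notin> K {v,n} n" using SubSide[OF e gn(1,2)] by auto
      have fin: "finite (K {u,v} v)" using KV[OF vV] fV finite_subset by blast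
      have "K {v,n} n \<subset> K {u,v} v" using sub K_refl[of v "{u,v}"] by blast
      then have "card (K {v,n} n) < card (K {u,v} v)" by (rule psubset_card_mono[OF fin])
      then obtain l where "l \<in> leaves V E" "l \<in> K {v,n} n" "l \<notin> K {x,y} y"
        using less.hyps[OF _ gn(1) f gf sub1] by blast
      then show ?thesis using sub by blast
    qed
  qed
qed

end

context ptree
begin

definition L :: "'v set \<Rightarrow> 'v \<Rightarrow> 'x set" where "L g p = {x \<in> X. \<phi> x \<in> K g p}"

lemma induces_iff: "induces_split X E \<phi> g B \<longleftrightarrow> (\<exists>u v. g = {u,v} \<and> B = L g u)"
  unfolding induces_split_def L_def K_def by auto

lemma L_sub: "L g p \<subseteq> X" by (auto simp: L_def)

lemma L_compl: "{a,b} \<in> E \<Longrightarrow> L {a,b} b = X - L {a,b} a"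
proof -
  assume ab: "{a,b} \<in> E"
  show ?thesis
  proof
    show "L {a,b} b \<subseteq> X - L {a,b} a" using Disj[OF ab] by (auto simp: L_def)
    show "X - L {a,b} a \<subseteq> L {a,b} b" using EO1[OF ab] phiV by (auto simp: L_def)
  qed
qed

lemma U0:
  assumes eq: "e = {u,v}" "f = {x,y}" and E: "e \<in> E" "f \<in> E" and ef: "e \<noteq> f"
    and uK: "u \<in> K f x" and L1: "L e u = L f x" and L2: "L e v = L f y"
  shows False
proof -
  have eE: "{u,v} \<in> E" and fE': "{x,y} \<in> E" using E eq by auto
  have "v \<in> K f x" using K_clos[OF uK eE] ef eq by simp
  have yV: "y \<in> V" using edge_in fE' by simp
  have uy: "u \<notin> K f y" using Disj[OF fE'] uK eq by blast
  have vy: "v \<notin> K f y" using Disj[OF fE'] \<open>v \<in> K f x\<close> eq by blast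
  have all: "\<forall>z\<in>{u,v}. z \<notin> K {x,y} y" using uy vy eq by simp
  have ef': "{u,v} \<noteq> {x,y}" using ef eq by simp
  have sub: "K {x,y} y \<subseteq> K {u,v} y" using Mono[OF eE ef' all] .
  from EO1[OF eE yV] show False
  proof
    assume "y \<in> K {u,v} v"
    then have "K {x,y} y \<subseteq> K {u,v} v" using subset_trans[OF sub K_trans] by blast
    then obtain l where l: "l \<in> leaves V E" "l \<in> K {u,v} v" "l \<notin> K {x,y} y"
      using Q[OF eE fE' ef'] by blast
    obtain z where z: "z \<in> X" "l = \<phi> z" using leafX[OF l(1)] by blast
    have "z \<in> L e v" using z l eq by (simp add: L_def)
    then have "z \<in> L f y" using L2 by simp
    then show False using z l eq by (simp add: L_def)
  next
    assume "y \<in> K {u,v} u"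
    then have sub2: "K {x,y} y \<subseteq> K {u,v} u" using subset_trans[OF sub K_trans] by blast
    obtain l where l: "l \<in> leaves V E" "l \<in> K {u,v} v" using Leaf1[OF eE] by blast
    obtain z where z: "z \<in> X" "l = \<phi> z" using leafX[OF l(1)] by blast
    have "z \<in> L e v" using z l eq by (simp add: L_def)
    then have "z \<in> L f y" using L2 by simp
    then have "l \<in> K {u,v} u" using z sub2 eq by (auto simp: L_def)
    then show False using Disj[OF eE] l(2) by blast
  qed
qed

lemma U:
  assumes E: "e \<in> E" "f \<in> E" and ie: "induces_split X E \<phi> e B" and i_f: "induces_split X E \<phi> f B"
  shows "e = f"
proof (rule ccontr)
  assume ef: "e \<noteq> f"
  obtain u v where e: "e = {u,v}" "B = L e u" using ie[unfolded induces_iff] by blast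
  obtain x y where f: "f = {x,y}" "B = L f x" using i_f[unfolded induces_iff] by blast
  have eE: "{u,v} \<in> E" using E(1) e(1) by simp
  have fE': "{x,y} \<in> E" using E(2) f(1) by simp
  have L1: "L e u = L f x" using e(2)[symmetric] f(2) by (rule trans)
  have "L e v = X - L e u" using L_compl[OF eE] e(1) by simp
  also have "\<dots> = X - L f x" using L1 by simp
  also have "\<dots> = L f y" using L_compl[OF fE'] f(1) by simp
  finally have L2: "L e v = L f y" .
  have uV: "u \<in> V" using edge_in eE by simp
  from EO1[OF fE' uV] show False
  proof
    assume "u \<in> K {x,y} x"
    then have uK: "u \<in> K f x" using f by simp
    show False by (rule U0[OF e(1) f(1) E ef uK L1 L2])
  next
    assume uy: "u \<in> K {x,y} y"
    have e': "e = {v,u}" using e by (simp add: insert_commute)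
    have f': "f = {y,x}" using f by (simp add: insert_commute)
    have ne: "{u,v} \<noteq> f" using ef e by simp
    have vK: "v \<in> K f y" using K_clos[OF uy eE] ne f by simp
    show False by (rule U0[OF e' f' E ef vK L2 L1])
  qed
qed

lemma W1: "g \<in> E \<Longrightarrow> induces_split X E \<phi> g B \<Longrightarrow> wsplit X E \<phi> len B = len g"
proof -
  assume g: "g \<in> E" "induces_split X E \<phi> g B"
  have "(SOME e. e \<in> E \<and> induces_split X E \<phi> e B) = g"
  proof (rule some_equality)
    show "g \<in> E \<and> induces_split X E \<phi> g B" using g by simp
    fix e assume "e \<in> E \<and> induces_split X E \<phi> e B"
    then show "e = g" using U[of e g B] g by blast
  qed
  then show ?thesis using g unfolding wsplit_def by auto
qed

lemma W0: "\<not> (\<exists>e\<in>E. induces_split X E \<phi> e B) \<Longrightarrow> wsplit X E \<phi> len B = 0"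
  unfolding wsplit_def by auto

lemma ind_sub: "induces_split X E \<phi> g B \<Longrightarrow> B \<subseteq> X"
  unfolding induces_iff using L_sub by blast

lemma ind_compl: "g \<in> E \<Longrightarrow> induces_split X E \<phi> g B \<Longrightarrow> induces_split X E \<phi> g (X - B)"
proof -
  assume g: "g \<in> E" "induces_split X E \<phi> g B"
  obtain u v where uv: "g = {u,v}" "B = L g u" using g(2)[unfolded induces_iff] by blast
  have "X - B = L g v" using L_compl[of u v] g uv by simp
  moreover have "g = {v,u}" using uv by (simp add: insert_commute)
  ultimately show ?thesis unfolding induces_iff by blast
qed

lemma W_sym: "B \<subseteq> X \<Longrightarrow> wsplit X E \<phi> len (X - B) = wsplit X E \<phi> len B"
proof -
  assume BX: "B \<subseteq> X"
  show ?thesis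
  proof (cases "\<exists>e\<in>E. induces_split X E \<phi> e B")
    case True
    then obtain e where e: "e \<in> E" "induces_split X E \<phi> e B" by blast
    have "wsplit X E \<phi> len B = len e" by (rule W1[OF e])
    moreover have "wsplit X E \<phi> len (X - B) = len e" by (rule W1[OF e(1) ind_compl[OF e]])
    ultimately show ?thesis by simp
  next
    case False
    have "\<not> (\<exists>e\<in>E. induces_split X E \<phi> e (X - B))"
    proof
      assume "\<exists>e\<in>E. induces_split X E \<phi> e (X - B)"
      then obtain e where "e \<in> E" "induces_split X E \<phi> e (X - B)" by blast
      then have "induces_split X E \<phi> e (X - (X - B))" using ind_compl by blast
      moreover have "X - (X - B) = B" using BX by blast
      ultimately show False using False \<open>e \<in> E\<close> by auto
    qed
    then show ?thesis using W0[OF False] W0[of "X - B"] by simp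
  qed
qed

lemma spl: "{a,b} \<in> E \<Longrightarrow> {B. induces_split X E \<phi> {a,b} B} = {L {a,b} a, L {a,b} b}"
proof -
  assume ab: "{a,b} \<in> E"
  show ?thesis
  proof
    show "{B. induces_split X E \<phi> {a,b} B} \<subseteq> {L {a,b} a, L {a,b} b}"
    proof
      fix B assume "B \<in> {B. induces_split X E \<phi> {a,b} B}"
      then obtain u v where uv: "{a,b} = {u,v}" "B = L {a,b} u" unfolding induces_iff by blast
      then have "u = a \<or> u = b" by (auto simp: doubleton_eq_iff)
      then show "B \<in> {L {a,b} a, L {a,b} b}" using uv(2) by auto
    qed
    have "induces_split X E \<phi> {a,b} (L {a,b} a)" unfolding induces_iff by blast
    moreover have "induces_split X E \<phi> {a,b} (L {a,b} b)"
      unfolding induces_iff by (rule exI[of _ b], rule exI[of _ a]) (simp add: insert_commute)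
    ultimately show "{L {a,b} a, L {a,b} b} \<subseteq> {B. induces_split X E \<phi> {a,b} B}" by simp
  qed
qed

lemma L_neq: "{a,b} \<in> E \<Longrightarrow> L {a,b} a \<noteq> L {a,b} b"
proof
  assume ab: "{a,b} \<in> E" and eq: "L {a,b} a = L {a,b} b"
  obtain l where l: "l \<in> leaves V E" "l \<in> K {a,b} b" using Leaf1[OF ab] by blast
  obtain z where z: "z \<in> X" "l = \<phi> z" using leafX[OF l(1)] by blast
  have "z \<in> L {a,b} b" using z l by (simp add: L_def)
  then have "z \<in> L {a,b} a" using eq by simp
  then have "l \<in> K {a,b} a" using z by (simp add: L_def)
  then show False using Disj[OF ab] l(2) by blast
qed

lemma spl_card: "g \<in> E \<Longrightarrow> card {B. induces_split X E \<phi> g B} = 2"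
proof -
  assume g: "g \<in> E"
  from edge2[OF g] obtain a b where ab: "g = {a,b}" unfolding card_2_iff by blast
  have S: "{B. induces_split X E \<phi> g B} = {L g a, L g b}" using spl[of a b] g ab by simp
  have "L g a \<noteq> L g b" using L_neq[of a b] g ab by simp
  then show ?thesis unfolding S by simp
qed

lemma spl_fin: "g \<in> E \<Longrightarrow> finite {B. induces_split X E \<phi> g B}"
proof (rule ccontr)
  assume "g \<in> E" "infinite {B. induces_split X E \<phi> g B}"
  then show False using spl_card[of g] by simp
qed

lemma Sfam_compl: "B \<in> Sfam X A \<Longrightarrow> X - B \<in> Sfam X A"
proof -
  assume B: "B \<in> Sfam X A"
  then have "B \<subseteq> X" "A \<inter> B \<noteq> {}" "A \<inter> (X - B) \<noteq> {}" unfolding Sfam_def by auto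
  moreover have "X - (X - B) = B" using \<open>B \<subseteq> X\<close> by blast
  ultimately show ?thesis unfolding Sfam_def by simp
qed

lemma ind_two: "g \<in> E \<Longrightarrow> induces_split X E \<phi> g B \<Longrightarrow> induces_split X E \<phi> g B' \<Longrightarrow> B' = B \<or> B' = X - B"
proof -
  assume g: "g \<in> E" "induces_split X E \<phi> g B" "induces_split X E \<phi> g B'"
  from edge2[OF g(1)] obtain a b where ab: "g = {a,b}" unfolding card_2_iff by blast
  have S: "{B. induces_split X E \<phi> g B} = {L g a, L g b}" using spl[of a b] g(1) ab by simp
  have B: "B \<in> {L g a, L g b}" using g(2) unfolding S[symmetric] by simp
  have B': "B' \<in> {L g a, L g b}" using g(3) unfolding S[symmetric] by simp
  have c1: "L g b = X - L g a" using L_compl[of a b] g(1) ab by simp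
  have c2: "L g a = X - L g b" using L_compl[of b a] g(1) ab by (simp add: insert_commute)
  have "B = L g a \<or> B = L g b" "B' = L g a \<or> B' = L g b" using B B' by auto
  then show ?thesis
  proof (elim disjE)
    assume "B = L g a" "B' = L g a" then show ?thesis by simp
  next
    assume "B = L g a" "B' = L g b" then show ?thesis using c1 by simp
  next
    assume "B = L g b" "B' = L g a" then show ?thesis using c2 by simp
  next
    assume "B = L g b" "B' = L g b" then show ?thesis by simp
  qed
qed

definition SEf :: "'x set \<Rightarrow> 'v set set" where
  "SEf A = {g \<in> E. \<exists>B. induces_split X E \<phi> g B \<and> B \<in> Sfam X A}"

lemma sum_split:
  shows "(\<Sum>B\<in>Sfam X A. wsplit X E \<phi> len B) = 2 * (\<Sum>g\<in>SEf A. len g)"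
proof -
  define Spl where "Spl g = {B. induces_split X E \<phi> g B}" for g
  have UN: "{B \<in> Sfam X A. \<exists>g\<in>E. induces_split X E \<phi> g B} = (\<Union>g\<in>SEf A. Spl g)"
  proof
    show "{B \<in> Sfam X A. \<exists>g\<in>E. induces_split X E \<phi> g B} \<subseteq> (\<Union>g\<in>SEf A. Spl g)"
      unfolding SEf_def Spl_def by blast
    show "(\<Union>g\<in>SEf A. Spl g) \<subseteq> {B \<in> Sfam X A. \<exists>g\<in>E. induces_split X E \<phi> g B}"
    proof
      fix B assume "B \<in> (\<Union>g\<in>SEf A. Spl g)"
      then obtain g B0 where g: "g \<in> E" "induces_split X E \<phi> g B0" "B0 \<in> Sfam X A" "induces_split X E \<phi> g B"
        unfolding SEf_def Spl_def by blast
      then have "B = B0 \<or> B = X - B0" using ind_two by blast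
      then have "B \<in> Sfam X A" using g(3) Sfam_compl by blast
      then show "B \<in> {B \<in> Sfam X A. \<exists>g\<in>E. induces_split X E \<phi> g B}" using g by blast
    qed
  qed
  have finS: "finite (Sfam X A)"
  proof -
    have "Sfam X A \<subseteq> Pow X" unfolding Sfam_def by auto
    then show ?thesis using fX finite_subset by auto
  qed
  have "(\<Sum>B\<in>Sfam X A. wsplit X E \<phi> len B) = (\<Sum>B\<in>{B \<in> Sfam X A. \<exists>g\<in>E. induces_split X E \<phi> g B}. wsplit X E \<phi> len B)"
  proof (rule sum.mono_neutral_right)
    show "finite (Sfam X A)" by (rule finS)
    show "{B \<in> Sfam X A. \<exists>g\<in>E. induces_split X E \<phi> g B} \<subseteq> Sfam X A" by blast
    show "\<forall>B\<in>Sfam X A - {B \<in> Sfam X A. \<exists>g\<in>E. induces_split X E \<phi> g B}. wsplit X E \<phi> len B = 0"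
      using W0 by blast
  qed
  also have "\<dots> = (\<Sum>B\<in>(\<Union>g\<in>SEf A. Spl g). wsplit X E \<phi> len B)" using UN by simp
  also have "\<dots> = (\<Sum>g\<in>SEf A. \<Sum>B\<in>Spl g. wsplit X E \<phi> len B)"
  proof (rule sum.UNION_disjoint)
    show "finite (SEf A)" using fE unfolding SEf_def by simp
    show "\<forall>g\<in>SEf A. finite (Spl g)" unfolding SEf_def Spl_def using spl_fin by blast
    show "\<forall>g\<in>SEf A. \<forall>h\<in>SEf A. g \<noteq> h \<longrightarrow> Spl g \<inter> Spl h = {}"
    proof (intro ballI impI)
      fix g h assume gh: "g \<in> SEf A" "h \<in> SEf A" "g \<noteq> h"
      show "Spl g \<inter> Spl h = {}"
      proof (rule ccontr)
        assume "Spl g \<inter> Spl h \<noteq> {}"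
        then obtain B where "induces_split X E \<phi> g B" "induces_split X E \<phi> h B" unfolding Spl_def by blast
        moreover have "g \<in> E" "h \<in> E" using gh unfolding SEf_def by auto
        ultimately have "g = h" using U[of g h B] by blast
        then show False using gh by simp
      qed
    qed
  qed
  also have "\<dots> = (\<Sum>g\<in>SEf A. 2 * len g)"
  proof (rule sum.cong)
    fix g assume "g \<in> SEf A"
    then have g: "g \<in> E" unfolding SEf_def by simp
    have "(\<Sum>B\<in>Spl g. wsplit X E \<phi> len B) = (\<Sum>B\<in>Spl g. len g)"
    proof (rule sum.cong)
      fix B assume "B \<in> Spl g"
      then show "wsplit X E \<phi> len B = len g" using W1[OF g, of B] by (simp add: Spl_def)
    qed simp
    also have "\<dots> = 2 * len g" using spl_card[OF g] by (simp add: Spl_def)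
    finally show "(\<Sum>B\<in>Spl g. wsplit X E \<phi> len B) = 2 * len g" .
  qed simp
  finally show ?thesis by (simp add: sum_distrib_left)
qed

end

context ptree
begin

definition sepr :: "'v set \<Rightarrow> 'v \<Rightarrow> 'v \<Rightarrow> bool" where
  "sepr g a b \<longleftrightarrow> (\<exists>p q. g = {p,q} \<and> a \<in> K g p \<and> b \<in> K g q)"

lemma AvoidPath:
  "rtrancl_path (\<lambda>x y. (x,y) \<in> adj E) n ys b \<Longrightarrow> a \<notin> set (n # ys) \<Longrightarrow> a \<in> g \<Longrightarrow> (n,b) \<in> (adj (E - {g}))\<^sup>*"
proof (induction rule: rtrancl_path.induct)
  case (base x) then show ?case by simp
next
  case (step x y ys z)
  have "{x,y} \<in> E" using step.hyps(1) by (simp add: adj_def)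
  moreover have "{x,y} \<noteq> g" using step.prems by auto
  ultimately have "(x,y) \<in> adj (E - {g})" by (simp add: adj_def)
  moreover have "(y,z) \<in> (adj (E - {g}))\<^sup>*" using step.IH step.prems by simp
  ultimately show ?case by (rule converse_rtrancl_into_rtrancl)
qed

lemma PathSep:
  "rtrancl_path (\<lambda>x y. (x,y) \<in> adj E) a ys b \<Longrightarrow> distinct (a # ys) \<Longrightarrow> (a,b) \<in> (adj {g \<in> E. sepr g a b})\<^sup>*"
proof (induction rule: rtrancl_path.induct)
  case (base x) then show ?case by simp
next
  case (step a n ys b)
  have gE: "{a,n} \<in> E" using step.hyps(1) by (simp add: adj_def)
  have dist: "distinct (n # ys)" "a \<notin> set (n # ys)" using step.prems by auto
  have "(n,b) \<in> (adj (E - {{a,n}}))\<^sup>*" using AvoidPath[OF step.hyps(2) dist(2)] by simp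
  then have bK: "b \<in> K {a,n} n" by (simp add: K_def)
  have sab: "sepr {a,n} a b" unfolding sepr_def using K_refl bK by blast
  have subs: "{h \<in> E. sepr h n b} \<subseteq> {h \<in> E. sepr h a b}"
  proof
    fix h assume "h \<in> {h \<in> E. sepr h n b}"
    then have hE: "h \<in> E" and "sepr h n b" by auto
    then obtain p q where pq: "h = {p,q}" "n \<in> K h p" "b \<in> K h q" unfolding sepr_def by blast
    have hg: "h \<noteq> {a,n}"
    proof
      assume hg: "h = {a,n}"
      then have "(p = a \<and> q = n) \<or> (p = n \<and> q = a)" using pq(1) by (auto simp: doubleton_eq_iff)
      then show False
      proof
        assume "p = a \<and> q = n"
        then have "n \<in> K {a,n} a" using pq(2) hg by simp
        then show False using EO2[OF gE] by blast
      next
        assume "p = n \<and> q = a"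
        then have "b \<in> K {a,n} a" using pq(3) hg by simp
        then show False using Disj[OF gE] bK by blast
      qed
    qed
    have na: "{n,a} \<in> E" "{n,a} \<noteq> h" using gE hg by (simp_all add: insert_commute)
    have "a \<in> K h p" using K_clos[OF pq(2) na] .
    then have "sepr h a b" unfolding sepr_def using pq by blast
    then show "h \<in> {h \<in> E. sepr h a b}" using hE by simp
  qed
  have "(a,n) \<in> adj {g \<in> E. sepr g a b}" using gE sab by (simp add: adj_def)
  moreover have "(n,b) \<in> (adj {g \<in> E. sepr g a b})\<^sup>*" using rt_mono[OF subs step.IH[OF dist(1)]] .
  ultimately show ?case by (rule converse_rtrancl_into_rtrancl)
qed

lemma Path: "a \<in> V \<Longrightarrow> b \<in> V \<Longrightarrow> (a,b) \<in> (adj {g \<in> E. sepr g a b})\<^sup>*"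
proof -
  assume "a \<in> V" "b \<in> V"
  then have "(a,b) \<in> (adj E)\<^sup>*" using conn by simp
  then have "(\<lambda>x y. (x,y) \<in> adj E)\<^sup>*\<^sup>* a b" by (simp add: rtranclp_rtrancl_eq)
  then obtain xs where "rtrancl_path (\<lambda>x y. (x,y) \<in> adj E) a xs b" by (auto simp: rtranclp_eq_rtrancl_path)
  then obtain ys where "rtrancl_path (\<lambda>x y. (x,y) \<in> adj E) a ys b" "distinct (a # ys)"
    using rtrancl_path_distinct by metis
  then show ?thesis by (rule PathSep)
qed

lemma sepr_Disj: "g \<in> E \<Longrightarrow> sepr g a b \<Longrightarrow> (a,b) \<notin> (adj (E - {g}))\<^sup>*"
proof
  assume g: "g \<in> E" "sepr g a b" and ab: "(a,b) \<in> (adj (E - {g}))\<^sup>*"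
  obtain p q where pq: "g = {p,q}" "a \<in> K g p" "b \<in> K g q" using g(2) unfolding sepr_def by blast
  have "b \<in> K g a" using ab by (simp add: K_def)
  then have "b \<in> K g p" using K_trans[OF pq(2)] by blast
  then show False using Disj[of p q b] g(1) pq by simp
qed

lemma sepr_SE: "g \<in> E \<Longrightarrow> x1 \<in> A \<Longrightarrow> x2 \<in> A \<Longrightarrow> A \<subseteq> X \<Longrightarrow> sepr g (\<phi> x1) (\<phi> x2) \<Longrightarrow> g \<in> SEf A"
proof -
  assume g: "g \<in> E" "x1 \<in> A" "x2 \<in> A" "A \<subseteq> X" "sepr g (\<phi> x1) (\<phi> x2)"
  obtain p q where pq: "g = {p,q}" "\<phi> x1 \<in> K g p" "\<phi> x2 \<in> K g q" using g(5) unfolding sepr_def by blast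
  define B where "B = L g p"
  have ind: "induces_split X E \<phi> g B" unfolding induces_iff B_def using pq(1) by blast
  have x1B: "x1 \<in> B" using g pq by (auto simp: B_def L_def)
  have x2B: "x2 \<notin> B"
  proof
    assume "x2 \<in> B" then have "\<phi> x2 \<in> K g p" by (simp add: B_def L_def)
    then show False using Disj[of p q "\<phi> x2"] g(1) pq by simp
  qed
  have "B \<in> Sfam X A" unfolding Sfam_def using x1B x2B g L_sub[of g p] by (auto simp: B_def)
  then show ?thesis unfolding SEf_def using g(1) ind by blast
qed

lemma SE_sepr: "g \<in> SEf A \<Longrightarrow> A \<subseteq> X \<Longrightarrow> \<exists>x1\<in>A. \<exists>x2\<in>A. sepr g (\<phi> x1) (\<phi> x2)"
proof -
  assume g: "g \<in> SEf A" "A \<subseteq> X"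
  then obtain B where gE: "g \<in> E" and ind: "induces_split X E \<phi> g B" and BS: "B \<in> Sfam X A"
    unfolding SEf_def by blast
  obtain u v where uv: "g = {u,v}" "B = L g u" using ind[unfolded induces_iff] by blast
  obtain x1 where x1: "x1 \<in> A" "x1 \<in> B" using BS unfolding Sfam_def by blast
  obtain x2 where x2: "x2 \<in> A" "x2 \<in> X" "x2 \<notin> B" using BS unfolding Sfam_def by blast
  have k1: "\<phi> x1 \<in> K g u" using x1 uv by (simp add: L_def)
  have "\<phi> x2 \<notin> K g u" using x2 uv by (simp add: L_def)
  moreover have "\<phi> x2 \<in> K g u \<or> \<phi> x2 \<in> K g v" using EO1[of u v "\<phi> x2"] gE uv phiV[OF x2(2)] by simp
  ultimately have k2: "\<phi> x2 \<in> K g v" by simp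
  have "sepr g (\<phi> x1) (\<phi> x2)" unfolding sepr_def using uv(1) k1 k2 by blast
  then show ?thesis using x1(1) x2(1) by blast
qed

lemma Cross: "(a,w) \<in> (adj F)\<^sup>* \<Longrightarrow> (a,w) \<in> (adj (F - {g}))\<^sup>* \<or> (\<exists>z\<in>g. (a,z) \<in> (adj F)\<^sup>*)"
proof (induction rule: rtrancl_induct)
  case base then show ?case by simp
next
  case (step w w')
  show ?case
  proof (cases "{w,w'} = g")
    case True then show ?thesis using step.hyps(1) by blast
  next
    case False
    then have "(w,w') \<in> adj (F - {g})" using step.hyps(2) by (simp add: adj_def)
    show ?thesis using step.IH
    proof
      assume "(a, w) \<in> (adj (F - {g}))\<^sup>*"
      then show ?thesis using \<open>(w,w') \<in> adj (F - {g})\<close> by (simp add: rtrancl_into_rtrancl)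
    next
      assume "\<exists>z\<in>g. (a, z) \<in> (adj F)\<^sup>*" then show ?thesis by blast
    qed
  qed
qed

lemma span:
  assumes AX: "A \<subseteq> X" and cA: "2 \<le> card A"
  shows "span_edges V E \<phi> A = SEf A"
proof -
  define S where "S = SEf A"
  have SE: "S \<subseteq> E" unfolding S_def SEf_def by auto
  have "A \<noteq> {}" using cA by auto
  then obtain x0 where x0: "x0 \<in> A" by blast
  define a0 where "a0 = \<phi> x0"
  have a0V: "a0 \<in> V" using phiV x0 AX a0_def by blast
  define V' where "V' = {w. (a0,w) \<in> (adj S)\<^sup>*}"
  have phiA: "\<phi> ` A \<subseteq> V'"
  proof
    fix a assume "a \<in> \<phi> ` A"
    then obtain x where x: "x \<in> A" "a = \<phi> x" by blast
    have aV: "a \<in> V" using phiV x AX by blast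
    have "{g \<in> E. sepr g a0 a} \<subseteq> S"
      unfolding S_def a0_def using sepr_SE x x0 AX by blast
    then show "a \<in> V'" unfolding V'_def using rt_mono[OF _ Path[OF a0V aV]] by blast
  qed
  have reachAB: "\<And>a b. a \<in> \<phi> ` A \<Longrightarrow> b \<in> \<phi> ` A \<Longrightarrow> (a,b) \<in> (adj S)\<^sup>*"
  proof -
    fix a b assume "a \<in> \<phi> ` A" "b \<in> \<phi> ` A"
    then have "(a0,a) \<in> (adj S)\<^sup>*" "(a0,b) \<in> (adj S)\<^sup>*" using phiA unfolding V'_def by auto
    then show "(a,b) \<in> (adj S)\<^sup>*" using rt_sym[of a0 a S] rtrancl_trans[of a a0 "adj S" b] by blast
  qed
  have edgesV': "\<And>g. g \<in> S \<Longrightarrow> g \<subseteq> V'"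
  proof -
    fix g assume gS: "g \<in> S"
    then have gE: "g \<in> E" using SE by blast
    obtain x1 x2 where xs: "x1 \<in> A" "x2 \<in> A" "sepr g (\<phi> x1) (\<phi> x2)" using SE_sepr gS AX unfolding S_def by blast
    have ab: "(\<phi> x1, \<phi> x2) \<in> (adj S)\<^sup>*" using reachAB xs by blast
    have "(\<phi> x1, \<phi> x2) \<notin> (adj (S - {g}))\<^sup>*"
    proof
      assume "(\<phi> x1, \<phi> x2) \<in> (adj (S - {g}))\<^sup>*"
      moreover have "S - {g} \<subseteq> E - {g}" using SE by blast
      ultimately have "(\<phi> x1, \<phi> x2) \<in> (adj (E - {g}))\<^sup>*" using rt_mono[of "S - {g}" "E - {g}"] by blast
      then show False using sepr_Disj[OF gE xs(3)] by blast
    qed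
    then obtain z where z: "z \<in> g" "(\<phi> x1, z) \<in> (adj S)\<^sup>*" using Cross[OF ab] by blast
    have "(a0, \<phi> x1) \<in> (adj S)\<^sup>*" using phiA xs(1) unfolding V'_def by auto
    then have zV: "(a0, z) \<in> (adj S)\<^sup>*" using z(2) by (rule rtrancl_trans)
    obtain z' where gz: "g = {z,z'}" using edge_at[OF gE z(1)] by blast
    have "(z,z') \<in> adj S" using gS gz by (simp add: adj_def)
    then have "(a0, z') \<in> (adj S)\<^sup>*" using zV by (rule rtrancl_into_rtrancl[rotated])
    then show "g \<subseteq> V'" using zV gz unfolding V'_def by simp
  qed
  have sub: "subtree V E V' S"
    unfolding subtree_def
  proof (intro conjI)
    show "V' \<subseteq> V" unfolding V'_def using reachV SE a0V by blast
    show "S \<subseteq> E" by (rule SE)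
    show "\<forall>e\<in>S. e \<subseteq> V'" using edgesV' by blast
    show "V' \<noteq> {}" unfolding V'_def by auto
    show "connected_graph V' S" unfolding connected_graph_def
    proof (intro ballI)
      fix u w assume "u \<in> V'" "w \<in> V'"
      then have "(a0,u) \<in> (adj S)\<^sup>*" "(a0,w) \<in> (adj S)\<^sup>*" unfolding V'_def by auto
      then show "(u,w) \<in> (adj S)\<^sup>*" using rt_sym[of a0 u S] rtrancl_trans[of u a0 "adj S" w] by blast
    qed
  qed
  have minimal: "\<forall>V'' E''. subtree V E V'' E'' \<and> \<phi> ` A \<subseteq> V'' \<longrightarrow> V' \<subseteq> V'' \<and> S \<subseteq> E''"
  proof (intro allI impI)
    fix V'' E'' assume h: "subtree V E V'' E'' \<and> \<phi> ` A \<subseteq> V''"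
    then have E''E: "E'' \<subseteq> E" and E''V: "\<forall>e\<in>E''. e \<subseteq> V''" and cE: "connected_graph V'' E''"
      and AV: "\<phi> ` A \<subseteq> V''" unfolding subtree_def by auto
    have SE'': "S \<subseteq> E''"
    proof
      fix g assume gS: "g \<in> S"
      then have gE: "g \<in> E" using SE by blast
      obtain x1 x2 where xs: "x1 \<in> A" "x2 \<in> A" "sepr g (\<phi> x1) (\<phi> x2)" using SE_sepr gS AX unfolding S_def by blast
      have "(\<phi> x1, \<phi> x2) \<in> (adj E'')\<^sup>*" using cE AV xs unfolding connected_graph_def by blast
      show "g \<in> E''"
      proof (rule ccontr)
        assume "g \<notin> E''"
        then have "E'' \<subseteq> E - {g}" using E''E by blast
        then have "(\<phi> x1, \<phi> x2) \<in> (adj (E - {g}))\<^sup>*" using rt_mono[OF _ \<open>(\<phi> x1, \<phi> x2) \<in> (adj E'')\<^sup>*\<close>] by blast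
        then show False using sepr_Disj[OF gE xs(3)] by blast
      qed
    qed
    have "V' \<subseteq> V''"
    proof
      fix w assume "w \<in> V'"
      then have "(a0,w) \<in> (adj S)\<^sup>*" unfolding V'_def by simp
      then show "w \<in> V''"
      proof (induction rule: rtrancl_induct)
        case base then show ?case using AV x0 a0_def by blast
      next
        case (step w w')
        then have "{w,w'} \<in> E''" using SE'' by (auto simp: adj_def)
        then show ?case using E''V by blast
      qed
    qed
    then show "V' \<subseteq> V'' \<and> S \<subseteq> E''" using SE'' by simp
  qed
  have "span_edges V E \<phi> A = S"
    unfolding span_edges_def
  proof (rule the_equality)
    show "\<exists>V'. subtree V E V' S \<and> \<phi> ` A \<subseteq> V' \<and>
      (\<forall>V'' E''. subtree V E V'' E'' \<and> \<phi> ` A \<subseteq> V'' \<longrightarrow> V' \<subseteq> V'' \<and> S \<subseteq> E'')"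
      using sub phiA minimal by blast
    fix E' assume "\<exists>V1. subtree V E V1 E' \<and> \<phi> ` A \<subseteq> V1 \<and>
      (\<forall>V'' E''. subtree V E V'' E'' \<and> \<phi> ` A \<subseteq> V'' \<longrightarrow> V1 \<subseteq> V'' \<and> E' \<subseteq> E'')"
    then obtain V1 where V1: "subtree V E V1 E'" "\<phi> ` A \<subseteq> V1"
      "\<forall>V'' E''. subtree V E V'' E'' \<and> \<phi> ` A \<subseteq> V'' \<longrightarrow> V1 \<subseteq> V'' \<and> E' \<subseteq> E''" by blast
    have "S \<subseteq> E'" using minimal V1(1,2) by blast
    moreover have "E' \<subseteq> S" using V1(3) sub phiA by blast
    ultimately show "E' = S" by blast
  qed
  then show ?thesis unfolding S_def .
qed

lemma sA_delta:
  assumes AX: "A \<subseteq> X"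
  shows "sA X (wtilde X E \<phi> len) A = delta V E \<phi> len A"
proof (cases "card A \<le> 1")
  case True
  have "Sfam X A = {}"
  proof (rule ccontr)
    assume "Sfam X A \<noteq> {}"
    then obtain B where "B \<in> Sfam X A" by blast
    then obtain a1 a2 where "a1 \<in> A" "a1 \<in> B" "a2 \<in> A" "a2 \<notin> B" unfolding Sfam_def by blast
    then have "{a1,a2} \<subseteq> A" "a1 \<noteq> a2" by auto
    moreover have "finite A" using AX fX finite_subset by blast
    ultimately have "card {a1,a2} \<le> card A" using card_mono by blast
    then show False using True \<open>a1 \<noteq> a2\<close> by simp
  qed
  then show ?thesis using True by (simp add: sA_def delta_def)
next
  case False
  have "sA X (wtilde X E \<phi> len) A = (\<Sum>B\<in>Sfam X A. wsplit X E \<phi> len B) / 2"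
    unfolding sA_def wtilde_def by (simp add: sum_divide_distrib)
  also have "\<dots> = (\<Sum>g\<in>SEf A. len g)" by (simp add: sum_split)
  also have "\<dots> = delta V E \<phi> len A" using False span[OF AX] by (simp add: delta_def)
  finally show ?thesis .
qed

lemma gamma_mu: "gamma X (wtilde X E \<phi> len) A = mu X E \<phi> len A"
  unfolding gamma_def mu_def
proof (cases "even (card A)")
  case True
  have "(\<Sum>B\<in>{B. B \<subseteq> X \<and> odd (card (A \<inter> B))}. ptilde X (wtilde X E \<phi> len) B)
      = (\<Sum>B\<in>{B. B \<subseteq> X \<and> odd (card (A \<inter> B))}. wtilde X E \<phi> len B)"
  proof (rule sum.cong)
    fix B assume "B \<in> {B. B \<subseteq> X \<and> odd (card (A \<inter> B))}"
    then have "B \<subseteq> X" by simp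
    then show "ptilde X (wtilde X E \<phi> len) B = wtilde X E \<phi> len B"
      unfolding ptilde_def wtilde_def using W_sym by simp
  qed simp
  then show "(if even (card A) then \<Sum>B\<in>{B. B \<subseteq> X \<and> odd (card (A \<inter> B))}. ptilde X (wtilde X E \<phi> len) B else 0) =
    (if even (card A) then \<Sum>B\<in>{B. B \<subseteq> X \<and> odd (card (A \<inter> B))}. wtilde X E \<phi> len B else 0)"
    by simp
next
  case False then show "(if even (card A) then \<Sum>B\<in>{B. B \<subseteq> X \<and> odd (card (A \<inter> B))}. ptilde X (wtilde X E \<phi> len) B else 0) =
    (if even (card A) then \<Sum>B\<in>{B. B \<subseteq> X \<and> odd (card (A \<inter> B))}. wtilde X E \<phi> len B else 0)"
    by simp
qed

end

theorem theorem5: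
  fixes X :: "'x set"
  assumes "finite X"
  shows
   "(\<forall>p :: 'x set \<Rightarrow> real.
       (\<forall>B. B \<subseteq> X \<longrightarrow> p B \<ge> 0) \<and> (\<Sum>B\<in>Pow X. p B) = 1 \<longrightarrow>
       (\<forall>A B. A \<subseteq> X \<and> B \<subseteq> X \<longrightarrow>
          gamma X p A = (\<Sum>C\<in>Pow A. (-2) powi (int (card C) - 2) * sA X p C) \<and>
          sA X p B = (1 / (2 powi (int (card B) - 2))) * (\<Sum>C\<in>Pow B. gamma X p C)))
    \<and>
    (\<forall>(V :: 'v set) E (\<phi> :: 'x \<Rightarrow> 'v) (len :: 'v set \<Rightarrow> real).
       phylo_tree X V E \<phi> \<and> (\<forall>e\<in>E. len e \<ge> 0) \<longrightarrow>
       (\<forall>A B. A \<subseteq> X \<and> B \<subseteq> X \<longrightarrow>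
          mu X E \<phi> len A = (\<Sum>C\<in>Pow A. (-2) powi (int (card C) - 2) * delta V E \<phi> len C) \<and>
          delta V E \<phi> len B = (1 / (2 powi (int (card B) - 2))) * (\<Sum>C\<in>Pow B. mu X E \<phi> len C)))"
  apply (intro conjI allI impI)
  subgoal for p A B using L1[OF assms, of A p] by blast
  subgoal for p A B using L2[OF assms, of B p] by blast
  subgoal premises prems for V E \<phi> len A B
  proof -
    interpret T: ptree X V E \<phi> using assms prems by unfold_locales auto
    have AX: "A \<subseteq> X" using prems by simp
    have "mu X E \<phi> len A = gamma X (wtilde X E \<phi> len) A" by (simp add: T.gamma_mu)
    also have "\<dots> = (\<Sum>C\<in>Pow A. (-2) powi (int (card C) - 2) * sA X (wtilde X E \<phi> len) C)"
      by (rule L1[OF assms AX])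
    also have "\<dots> = (\<Sum>C\<in>Pow A. (-2) powi (int (card C) - 2) * delta V E \<phi> len C)"
      by (rule sum.cong) (use AX T.sA_delta in auto)
    finally show ?thesis .
  qed
  subgoal premises prems for V E \<phi> len A B
  proof -
    interpret T: ptree X V E \<phi> using assms prems by unfold_locales auto
    have BX: "B \<subseteq> X" using prems by simp
    have "delta V E \<phi> len B = sA X (wtilde X E \<phi> len) B" by (simp add: T.sA_delta[OF BX])
    also have "\<dots> = (1 / (2 powi (int (card B) - 2))) * (\<Sum>C\<in>Pow B. gamma X (wtilde X E \<phi> len) C)"
      by (rule L2[OF assms BX])
    also have "\<dots> = (1 / (2 powi (int (card B) - 2))) * (\<Sum>C\<in>Pow B. mu X E \<phi> len C)"
      by (simp add: T.gamma_mu)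
    finally show ?thesis .
  qed
  done

end
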